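(* Let ${\bf r}=(r_0,r_1,\dots)$ be a finitely supported sequence of nonnegative integers with $n=\sum_{d\ge1}r_d\ge1$, $\ell=-\sum_{d\ge0}(d-1)r_d\ge1$. Then the polynomial identity $$\sum_{F\in\mathscr F({\bf r})}\prod_{v\in I(F)}\frac{((d_v-1)h_v+1)x+1-h_v}{d_vh_v}=\frac{\ell}{r_0}\cdot\frac{(r_0x)(r_0x-1)\cdots(r_0x-n+1)}{r_1!\,r_2!\cdots}$$ holds if and only if the polynomial identity $$\sum_{F\in\mathscr F({\bf r})}\prod_{v\in I(F)}\frac{(d_v+x)h_v-x}{d_vh_v}=\frac{\ell}{r_1!\,r_2!\cdots}\prod_{i=1}^{n-1}\big(r_0+i(1+x)\big)$$ holds.
   Context: A plane tree is an unlabelled rooted tree in which the children of every vertex are linearly ordered; a plane forest is a finite linearly ordered sequence of plane trees. For vertices $u,v$ in a tree, $v$ is a descendant of $u$ if $u$ lies on the path from the root to $v$ (so $u$ is a descendant of itself). The degree $d_v$ is the number of children of $v$; $v$ is internal if $d_v\ge1$. $I(F)$ is the set of internal vertices of $F$. The hook length $h_v$ of an internal vertex $v$ is the number of internal vertices among the descendants of $v$ (including $v$). A plane forest has type ${\bf r}$ if it has exactly $r_i$ vertices of degree $i$ for all $i\ge0$; $\mathscr F({\bf r})$ is the set of such forests. *)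

theory Defs
  imports "HOL-Computational_Algebra.Polynomial" "HOL-Library.Multiset"
begin

datatype ptree = Node "ptree list"

primrec degs :: "ptree \<Rightarrow> nat multiset" where
  "degs (Node ts) = {#length ts#} + sum_list (map degs ts)"

text \<open>Multiset of pairs (d_v, h_v) over the internal vertices v of a tree,
  where d_v is the degree and h_v the hook length (number of internal
  descendants of v, including v).  Note that the number of internal vertices
  of the subtree rooted at v is the size of this multiset for that subtree.\<close>
primrec ivs :: "ptree \<Rightarrow> (nat \<times> nat) multiset" where
  "ivs (Node ts) =
     (if ts = [] then {#} else {#(length ts, 1 + sum_list (map (size \<circ> ivs) ts))#})
     + sum_list (map ivs ts)"

definition forest_degs :: "ptree list \<Rightarrow> nat multiset" where
  "forest_degs F = sum_list (map degs F)"

definition forest_ivs :: "ptree list \<Rightarrow> (nat \<times> nat) multiset" where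
  "forest_ivs F = sum_list (map ivs F)"

definition forests_of_type :: "(nat \<Rightarrow> nat) \<Rightarrow> ptree list set" where
  "forests_of_type r = {F. \<forall>i. count (forest_degs F) i = r i}"

end

theory Submission imports Defs begin

lemma size_filter_sum_list: "size (filter_mset P (sum_list (map f ts))) = sum_list (map (\<lambda>t. size (filter_mset P (f t))) ts)"
  by (induction ts) auto

lemma size_sum_list_map: "size (sum_list (map (f::'b \<Rightarrow> 'a multiset) ts)) = sum_list (map (\<lambda>t. size (f t)) ts)"
  by (induction ts) auto

lemma size_ivs: "size (ivs t) = size (filter_mset (\<lambda>d. 0 < d) (degs t))"
proof (induction t)
  case (Node ts)
  have "sum_list (map (size \<circ> ivs) ts) = sum_list (map (\<lambda>t. size (filter_mset (\<lambda>d. 0 < d) (degs t))) ts)"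
    using Node by (induction ts) auto
  then show ?case by (simp add: size_filter_sum_list size_sum_list_map o_def)
qed

lemma size_forest_ivs: "size (forest_ivs F) = size (filter_mset (\<lambda>d. 0 < d) (forest_degs F))"
  unfolding forest_ivs_def forest_degs_def
  by (simp add: size_filter_sum_list size_sum_list_map size_ivs o_def)

lemma size_filter_count: "size (filter_mset (\<lambda>d. 0 < d) (M::nat multiset)) = (\<Sum>d\<in>{i. 1 \<le> i \<and> count M i \<noteq> 0}. count M d)"
proof -
  have "size (filter_mset (\<lambda>d. 0 < d) M) = sum (count (filter_mset (\<lambda>d. 0 < d) M)) (set_mset (filter_mset (\<lambda>d. 0 < d) M))"
    by (rule size_multiset_overloaded_eq)
  also have "set_mset (filter_mset (\<lambda>d. 0 < d) M) = {i. 1 \<le> i \<and> count M i \<noteq> 0}"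
    by (auto simp: Suc_le_eq)
  also have "sum (count (filter_mset (\<lambda>d. 0 < d) M)) {i. 1 \<le> i \<and> count M i \<noteq> 0} = (\<Sum>d\<in>{i. 1 \<le> i \<and> count M i \<noteq> 0}. count M d)"
    by (rule sum.cong) auto
  finally show ?thesis .
qed

lemma size_forest_type:
  assumes "F \<in> forests_of_type r"
  shows "size (forest_ivs F) = (\<Sum>d\<in>{i. 1 \<le> i \<and> r i \<noteq> 0}. r d)"
proof -
  have c: "count (forest_degs F) = r" using assms by (auto simp: forests_of_type_def)
  show ?thesis unfolding size_forest_ivs size_filter_count c ..
qed

lemma prod_mset_scale: "(\<Prod>a\<in>#M. (x::real) * g a) = x ^ size M * (\<Prod>a\<in>#M. g a)"
  by (induction M) (auto simp: algebra_simps)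

lemma poly_eq_cofinite:
  fixes p q :: "real poly"
  assumes "finite S" "\<And>x. x \<notin> S \<Longrightarrow> poly p x = poly q x"
  shows "p = q"
proof -
  have "{x. poly (p - q) x = 0} \<supseteq> - S" using assms(2) by auto
  moreover have "infinite (- S)" using assms(1) by (simp add: Compl_eq_Diff_UNIV infinite_UNIV_char_0 Diff_infinite_finite)
  ultimately have "infinite {x. poly (p - q) x = 0}" using finite_subset by blast
  then have "p - q = 0" using poly_roots_finite by blast
  then show ?thesis by simp
qed

theorem lemma3p2:
  fixes r :: "nat \<Rightarrow> nat" and n :: nat and l :: int
  assumes fin: "finite {i. r i \<noteq> 0}"
    and n_def: "n = (\<Sum>d\<in>{i. 1 \<le> i \<and> r i \<noteq> 0}. r d)"
    and l_def: "l = - (\<Sum>d\<in>{i. r i \<noteq> 0}. (int d - 1) * int (r d))"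
    and n_pos: "n \<ge> 1" and l_pos: "l \<ge> 1"
  shows
   "((\<Sum>F\<in>forests_of_type r.
        \<Prod>(d, h)\<in>#forest_ivs F.
          smult (1 / (real d * real h))
            [: 1 - real h, (real d - 1) * real h + 1 :])
     = smult (real_of_int l / real (r 0)
              / real (\<Prod>d\<in>{i. 1 \<le> i \<and> r i \<noteq> 0}. fact (r d)))
         (\<Prod>k<n. [: - real k, real (r 0) :]))
   \<longleftrightarrow>
    ((\<Sum>F\<in>forests_of_type r.
        \<Prod>(d, h)\<in>#forest_ivs F.
          smult (1 / (real d * real h))
            [: real d * real h, real h - 1 :])
     = smult (real_of_int l
              / real (\<Prod>d\<in>{i. 1 \<le> i \<and> r i \<noteq> 0}. fact (r d)))
         (\<Prod>i\<in>{1..<n}. [: real (r 0) + real i, real i :]))"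
proof -
  define phi :: "real \<Rightarrow> real" where "phi x = -1 - 1/x" for x
  define P :: real where "P = real (\<Prod>d\<in>{i. 1 \<le> i \<and> r i \<noteq> 0}. fact (r d))"
  define S1 where "S1 = (\<Sum>F\<in>forests_of_type r.
        \<Prod>(d, h)\<in>#forest_ivs F.
          smult (1 / (real d * real h))
            [: 1 - real h, (real d - 1) * real h + 1 :])"
  define S2 where "S2 = (\<Sum>F\<in>forests_of_type r.
        \<Prod>(d, h)\<in>#forest_ivs F.
          smult (1 / (real d * real h))
            [: real d * real h, real h - 1 :])"
  define R1 where "R1 = smult (real_of_int l / real (r 0) / P) (\<Prod>k<n. [: - real k, real (r 0) :])"
  define R2 where "R2 = smult (real_of_int l / P) (\<Prod>i\<in>{1..<n}. [: real (r 0) + real i, real i :])"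
  have r0: "r 0 \<noteq> 0"
  proof
    assume h: "r 0 = 0"
    have "(\<Sum>d\<in>{i. r i \<noteq> 0}. (int d - 1) * int (r d)) \<ge> 0"
    proof (rule sum_nonneg)
      fix d assume "d \<in> {i. r i \<noteq> 0}"
      then have "d \<ge> 1" using h by (cases d) auto
      then show "0 \<le> (int d - 1) * int (r d)" by simp
    qed
    then show False using l_def l_pos by simp
  qed
  have keyS: "poly S1 x = x ^ n * poly S2 (phi x)" if x: "x \<noteq> 0" for x
  proof -
    have "poly S1 x = (\<Sum>F\<in>forests_of_type r. x ^ n * poly (\<Prod>(d, h)\<in>#forest_ivs F.
          smult (1 / (real d * real h))
            [: real d * real h, real h - 1 :]) (phi x))"
      unfolding S1_def poly_sum
    proof (rule sum.cong[OF refl])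
      fix F assume F: "F \<in> forests_of_type r"
      have "poly (\<Prod>(d, h)\<in>#forest_ivs F.
          smult (1 / (real d * real h))
            [: 1 - real h, (real d - 1) * real h + 1 :]) x =
        (\<Prod>a\<in>#forest_ivs F. x * (case a of (d,h) \<Rightarrow> poly (smult (1 / (real d * real h))
            [: real d * real h, real h - 1 :]) (phi x)))"
        unfolding poly_prod_mset image_mset.compositionality o_def
        apply (rule arg_cong[where f=prod_mset])
        apply (rule image_mset_cong)
        using x by (auto simp: field_simps phi_def)
      also have "\<dots> = x ^ n * poly (\<Prod>(d, h)\<in>#forest_ivs F.
          smult (1 / (real d * real h))
            [: real d * real h, real h - 1 :]) (phi x)"
        unfolding prod_mset_scale size_forest_type[OF F] n_def[symmetric] poly_prod_mset
          image_mset.compositionality o_def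
        by (simp add: case_prod_beta)
      finally show "poly (\<Prod>(d, h)\<in>#forest_ivs F.
          smult (1 / (real d * real h))
            [: 1 - real h, (real d - 1) * real h + 1 :]) x = x ^ n * poly (\<Prod>(d, h)\<in>#forest_ivs F.
          smult (1 / (real d * real h))
            [: real d * real h, real h - 1 :]) (phi x)" .
    qed
    also have "\<dots> = x ^ n * poly S2 (phi x)"
      unfolding S2_def poly_sum by (simp add: sum_distrib_left)
    finally show ?thesis .
  qed
  have keyR: "poly R1 x = x ^ n * poly R2 (phi x)" if x: "x \<noteq> 0" for x
  proof -
    have nset: "{..<n} = insert 0 {1..<n}" using n_pos by auto
    have "(\<Prod>k<n. real (r 0) * x - real k) = real (r 0) * x * (\<Prod>i\<in>{1..<n}. x * (real (r 0) + real i + real i * phi x))"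
    proof -
      have "(\<Prod>i\<in>{1..<n}. real (r 0) * x - real i) = (\<Prod>i\<in>{1..<n}. x * (real (r 0) + real i + real i * phi x))"
        by (rule prod.cong[OF refl]) (use x in \<open>simp add: phi_def field_simps\<close>)
      then show ?thesis unfolding nset by (subst prod.insert) auto
    qed
    also have "\<dots> = real (r 0) * x * (x ^ (n - 1) * (\<Prod>i\<in>{1..<n}. (real (r 0) + real i + real i * phi x)))"
      by (simp add: prod.distrib)
    also have "\<dots> = real (r 0) * (x ^ n * (\<Prod>i\<in>{1..<n}. (real (r 0) + real i + real i * phi x)))"
      using n_pos by (cases n) auto
    finally have e: "(\<Prod>k<n. real (r 0) * x - real k) = real (r 0) * (x ^ n * (\<Prod>i\<in>{1..<n}. (real (r 0) + real i + real i * phi x)))" .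
    have "poly R1 x = real_of_int l / real (r 0) / P * (\<Prod>k<n. real (r 0) * x - real k)"
      unfolding R1_def by (simp add: poly_prod algebra_simps)
    also have "\<dots> = x ^ n * poly R2 (phi x)"
      unfolding e R2_def using r0 by (simp add: poly_prod algebra_simps)
    finally show ?thesis .
  qed
  have "S1 = R1 \<longleftrightarrow> S2 = R2"
  proof
    assume h: "S1 = R1"
    show "S2 = R2"
    proof (rule poly_eq_cofinite[of "{-1}"])
      fix y :: real assume "y \<notin> {-1}"
      then have y: "y + 1 \<noteq> 0" by auto
      define x where "x = -1 / (y + 1)"
      have x: "x \<noteq> 0" using y by (simp add: x_def)
      have px: "phi x = y" using y by (simp add: phi_def x_def field_simps)
      have "x ^ n * poly S2 y = x ^ n * poly R2 y"
        using keyS[OF x] keyR[OF x] h px by metis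
      then show "poly S2 y = poly R2 y" using x by simp
    qed simp
  next
    assume h: "S2 = R2"
    show "S1 = R1"
      by (rule poly_eq_cofinite[of "{0}"]) (use keyS keyR h in auto)
  qed
  then show ?thesis unfolding S1_def S2_def R1_def R2_def P_def .
qed

end
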